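(* Let $A$ be a noetherian ring, complete with respect to an ideal $I$, and let $f\in A$ be a non-zero divisor, defining the principal Cartier divisor $\mathcal{Z}=V(f)\subseteq\mathcal{U}:=\operatorname{Spf}A$. For $m\ge0$ set $U_m:=\operatorname{Spec}A/I^m$. Let $k\ge1$ be such that $I^{m+k}\cap(f)=I^m\,(I^k\cap(f))$ for all $m\ge0$. Then: (1) For every $m\ge1$ and every $h\in A$ with $(h)+I^{m+k}=(f)+I^{m+k}$, there is a unit $t\in A^\times$ with $h-tf\in I^{m+k}$; in particular $tf$ is a generator of $(f)$ lifting $h$ modulo $I^{m+k}$. Consequently, any two such elements $h,h'$ satisfy $h'\equiv vh\pmod{I^{m+k}}$ for some unit $v\in A^\times$. (2) If $g\in A$ is a non-zero divisor with $(g)+I^{k+1}=(f)+I^{k+1}$, then $I^{m+k}\cap(g)=I^m\,(I^k\cap(g))$ for all $m\ge0$. (3) Every Cartier divisor $\mathcal{Z}'\subseteq\mathcal{U}$ with $\mathcal{Z}'\cap U_{k+1}=\mathcal{Z}\cap U_{k+1}$ is principal, i.e. of the form $V(g)$ for a non-zero divisor $g\in A$.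
   Context: A Cartier divisor in $\mathcal{U}=\operatorname{Spf}A$ is a closed formal subscheme which, on the members of some open covering of $\mathcal{U}$ by affine formal schemes $\operatorname{Spf}A_i$, is defined by a single non-zero divisor of $A_i$. Such $k$ exists by the Artin–Rees lemma. *)

theory Defs
  imports Main
begin

definition is_ideal :: "'a::comm_ring_1 set \<Rightarrow> bool" where
  "is_ideal J \<longleftrightarrow> 0 \<in> J \<and> (\<forall>x\<in>J. \<forall>y\<in>J. x + y \<in> J) \<and> (\<forall>a. \<forall>x\<in>J. a * x \<in> J)"

definition principal_ideal :: "'a::comm_ring_1 \<Rightarrow> 'a set" where
  "principal_ideal f = {a * f | a. True}"

definition ideal_sum :: "'a::comm_ring_1 set \<Rightarrow> 'a set \<Rightarrow> 'a set" where
  "ideal_sum I J = {x + y | x y. x \<in> I \<and> y \<in> J}"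

definition ideal_prod :: "'a::comm_ring_1 set \<Rightarrow> 'a set \<Rightarrow> 'a set" where
  "ideal_prod I J = {x. \<exists>(n::nat) a b. (\<forall>i<n. a i \<in> I \<and> b i \<in> J) \<and> x = (\<Sum>i<n. a i * b i)}"

fun ideal_pow :: "'a::comm_ring_1 set \<Rightarrow> nat \<Rightarrow> 'a set" where
  "ideal_pow I 0 = UNIV"
| "ideal_pow I (Suc n) = ideal_prod I (ideal_pow I n)"

definition ideal_gen :: "'a::comm_ring_1 set \<Rightarrow> 'a set" where
  "ideal_gen S = {x. \<exists>(n::nat) c s. (\<forall>i<n. s i \<in> S) \<and> x = (\<Sum>i<n. c i * s i)}"

definition non_zero_divisor :: "'a::comm_ring_1 \<Rightarrow> bool" where
  "non_zero_divisor f \<longleftrightarrow> (\<forall>a. a * f = 0 \<longrightarrow> a = 0)"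

definition unit_elem :: "'a::comm_ring_1 \<Rightarrow> bool" where
  "unit_elem t \<longleftrightarrow> (\<exists>u. t * u = 1)"

definition noetherian_ring :: "'a::comm_ring_1 itself \<Rightarrow> bool" where
  "noetherian_ring _ \<longleftrightarrow> (\<forall>J::'a set. is_ideal J \<longrightarrow> (\<exists>S. finite S \<and> J = ideal_gen S))"

text \<open>A is complete (and separated) with respect to the I-adic topology.\<close>
definition adically_complete :: "'a::comm_ring_1 set \<Rightarrow> bool" where
  "adically_complete I \<longleftrightarrow>
     (\<forall>x. (\<forall>n. x \<in> ideal_pow I n) \<longrightarrow> x = 0) \<and>
     (\<forall>x::nat \<Rightarrow> 'a. (\<forall>n. x (Suc n) - x n \<in> ideal_pow I n) \<longrightarrow>
        (\<exists>y. \<forall>n. y - x n \<in> ideal_pow I n))"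

section \<open>The completed localisation A_{s} = lim_n (A/I^n)_s\<close>

text \<open>An element of (A/I^n)_s is represented by a pair (a, j), meaning a / s^j.
  Two representatives are equal in (A/I^n)_s iff s^r (s^l a - s^j b) \<in> I^n for some r.\<close>

definition loc_eq :: "'a::comm_ring_1 set \<Rightarrow> 'a \<Rightarrow> nat \<Rightarrow> 'a \<times> nat \<Rightarrow> 'a \<times> nat \<Rightarrow> bool" where
  "loc_eq I s n p q \<longleftrightarrow>
     (\<exists>r. s ^ r * (s ^ snd q * fst p - s ^ snd p * fst q) \<in> ideal_pow I n)"

definition loc_add :: "'a::comm_ring_1 \<Rightarrow> 'a \<times> nat \<Rightarrow> 'a \<times> nat \<Rightarrow> 'a \<times> nat" where
  "loc_add s p q = (s ^ snd q * fst p + s ^ snd p * fst q, snd p + snd q)"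

definition loc_mul :: "'a::comm_ring_1 \<times> nat \<Rightarrow> 'a \<times> nat \<Rightarrow> 'a \<times> nat" where
  "loc_mul p q = (fst p * fst q, snd p + snd q)"

text \<open>Elements of A_{s}: compatible sequences (x_n)_n, x_n \<in> (A/I^n)_s.\<close>
definition cl_elem :: "'a::comm_ring_1 set \<Rightarrow> 'a \<Rightarrow> (nat \<Rightarrow> 'a \<times> nat) \<Rightarrow> bool" where
  "cl_elem I s x \<longleftrightarrow> (\<forall>n. loc_eq I s n (x (Suc n)) (x n))"

definition cl_eq :: "'a::comm_ring_1 set \<Rightarrow> 'a \<Rightarrow> (nat \<Rightarrow> 'a \<times> nat) \<Rightarrow> (nat \<Rightarrow> 'a \<times> nat) \<Rightarrow> bool" where
  "cl_eq I s x y \<longleftrightarrow> (\<forall>n. loc_eq I s n (x n) (y n))"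

definition cl_add :: "'a::comm_ring_1 \<Rightarrow> (nat \<Rightarrow> 'a \<times> nat) \<Rightarrow> (nat \<Rightarrow> 'a \<times> nat) \<Rightarrow> nat \<Rightarrow> 'a \<times> nat" where
  "cl_add s x y = (\<lambda>n. loc_add s (x n) (y n))"

definition cl_mul :: "(nat \<Rightarrow> 'a::comm_ring_1 \<times> nat) \<Rightarrow> (nat \<Rightarrow> 'a \<times> nat) \<Rightarrow> nat \<Rightarrow> 'a \<times> nat" where
  "cl_mul x y = (\<lambda>n. loc_mul (x n) (y n))"

definition cl_zero :: "nat \<Rightarrow> 'a::comm_ring_1 \<times> nat" where
  "cl_zero = (\<lambda>n. (0, 0))"

definition cl_of :: "'a::comm_ring_1 \<Rightarrow> nat \<Rightarrow> 'a \<times> nat" where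
  "cl_of a = (\<lambda>n. (a, 0))"

definition cl_nzd :: "'a::comm_ring_1 set \<Rightarrow> 'a \<Rightarrow> (nat \<Rightarrow> 'a \<times> nat) \<Rightarrow> bool" where
  "cl_nzd I s x \<longleftrightarrow> (\<forall>y. cl_elem I s y \<longrightarrow> cl_eq I s (cl_mul y x) cl_zero \<longrightarrow> cl_eq I s y cl_zero)"

definition locally_principal_nzd :: "'a::comm_ring_1 set \<Rightarrow> 'a \<Rightarrow> 'a set \<Rightarrow> bool" where
  "locally_principal_nzd I s J \<longleftrightarrow>
     (\<exists>\<phi>. cl_elem I s \<phi> \<and> cl_nzd I s \<phi> \<and>
        (\<forall>j\<in>J. \<exists>c. cl_elem I s c \<and> cl_eq I s (cl_of j) (cl_mul c \<phi>)) \<and>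
        (\<exists>m c js. (\<forall>i<m. cl_elem I s (c i) \<and> js i \<in> J) \<and>
           cl_eq I s \<phi> (foldr (cl_add s) (map (\<lambda>i. cl_mul (c i) (cl_of (js i))) [0..<m]) cl_zero)))"

text \<open>Cartier divisor in Spf A, given by its ideal J \<subseteq> A (closed formal subschemes of
  Spf A, A noetherian I-adically complete, correspond to ideals of A): there are
  s_1,...,s_m with D(s_i) covering Spf A (i.e. (s_1,...,s_m) + I = A) such that J is
  generated on each Spf A_{s_i} by a non-zero divisor of A_{s_i}.\<close>
definition cartier_divisor :: "'a::comm_ring_1 set \<Rightarrow> 'a set \<Rightarrow> bool" where
  "cartier_divisor I J \<longleftrightarrow> is_ideal J \<and>
     (\<exists>S. finite S \<and> ideal_sum (ideal_gen S) I = UNIV \<and>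
        (\<forall>s\<in>S. locally_principal_nzd I s J))"

end

theory Submission
  imports Defs
begin


lemma idealD:
  assumes "is_ideal J"
  shows "0 \<in> J" "\<And>x y. x \<in> J \<Longrightarrow> y \<in> J \<Longrightarrow> x + y \<in> J"
    "\<And>a x. x \<in> J \<Longrightarrow> a * x \<in> J"
  using assms unfolding is_ideal_def by auto

lemma ideal_mult_right: "is_ideal J \<Longrightarrow> x \<in> J \<Longrightarrow> x * a \<in> J"
  using idealD(3)[of J x a] by (simp add: mult.commute)

lemma ideal_neg: "is_ideal J \<Longrightarrow> x \<in> J \<Longrightarrow> - x \<in> J"
  using idealD(3)[of J x "-1"] by simp

lemma ideal_diff: "is_ideal J \<Longrightarrow> x \<in> J \<Longrightarrow> y \<in> J \<Longrightarrow> x - y \<in> J"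
  using idealD(2)[of J x "-y"] ideal_neg[of J y] by simp

lemma ideal_sum_fin:
  assumes "is_ideal J" "finite A" "\<And>i. i \<in> A \<Longrightarrow> f i \<in> J"
  shows "sum f A \<in> J"
  using assms(2,3)
proof (induction A rule: finite_induct)
  case empty then show ?case using idealD(1)[OF assms(1)] by simp
next
  case (insert x F) then show ?case using idealD(2)[OF assms(1)] by simp
qed

lemma ideal_UNIV: "is_ideal (UNIV::'a::comm_ring_1 set)"
  unfolding is_ideal_def by auto

lemma ideal_prodE:
  assumes "x \<in> ideal_prod I J"
  obtains n :: nat and f g where "\<forall>i<n. f i \<in> I \<and> g i \<in> J" "x = (\<Sum>i<n. f i * g i)"
  using assms unfolding ideal_prod_def mem_Collect_eq by blast

lemma ideal_prod_add1:
  assumes "x \<in> ideal_prod I J" "a \<in> I" "b \<in> J"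
  shows "x + a * b \<in> ideal_prod I J"
proof -
  obtain n :: nat and f g where fg: "\<forall>i<n. f i \<in> I \<and> g i \<in> J" "x = (\<Sum>i<n. f i * g i)"
    using assms(1) by (rule ideal_prodE)
  define f' where "f' = f(n := a)"
  define g' where "g' = g(n := b)"
  have "(\<Sum>i<Suc n. f' i * g' i) = (\<Sum>i<n. f' i * g' i) + a * b"
    by (simp add: f'_def g'_def)
  also have "(\<Sum>i<n. f' i * g' i) = x"
    unfolding fg(2) by (rule sum.cong) (auto simp: f'_def g'_def)
  finally have "x + a * b = (\<Sum>i<Suc n. f' i * g' i)" by simp
  moreover have "\<forall>i<Suc n. f' i \<in> I \<and> g' i \<in> J"
    using fg(1) assms(2,3) by (auto simp: f'_def g'_def less_Suc_eq)
  ultimately show ?thesis unfolding ideal_prod_def by blast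
qed

lemma ideal_prod_zero: "0 \<in> ideal_prod I J"
  unfolding ideal_prod_def by (rule CollectI, rule exI[of _ 0]) simp

lemma ideal_prod_single: "a \<in> I \<Longrightarrow> b \<in> J \<Longrightarrow> a * b \<in> ideal_prod I J"
  using ideal_prod_add1[OF ideal_prod_zero] by fastforce

lemma ideal_prod_add:
  assumes "x \<in> ideal_prod I J" "y \<in> ideal_prod I J"
  shows "x + y \<in> ideal_prod I J"
proof -
  obtain n :: nat and f g where fg: "\<forall>i<n. f i \<in> I \<and> g i \<in> J" "y = (\<Sum>i<n. f i * g i)"
    using assms(2) by (rule ideal_prodE)
  have "\<forall>m\<le>n. x + (\<Sum>i<m. f i * g i) \<in> ideal_prod I J"
  proof (intro allI impI)
    fix m assume "m \<le> n" then show "x + (\<Sum>i<m. f i * g i) \<in> ideal_prod I J"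
    proof (induction m)
      case 0 then show ?case using assms(1) by simp
    next
      case (Suc m)
      then have "x + (\<Sum>i<m. f i * g i) + f m * g m \<in> ideal_prod I J"
        using fg(1) by (intro ideal_prod_add1) auto
      then show ?case by (simp add: add.assoc)
    qed
  qed
  then show ?thesis using fg(2) by auto
qed

lemma ideal_prod_ideal:
  assumes "is_ideal J"
  shows "is_ideal (ideal_prod I J)"
  unfolding is_ideal_def
proof (intro conjI ballI allI)
  show "0 \<in> ideal_prod I J" by (rule ideal_prod_zero)
next
  fix x y assume "x \<in> ideal_prod I J" "y \<in> ideal_prod I J"
  then show "x + y \<in> ideal_prod I J" by (rule ideal_prod_add)
next
  fix a x assume "x \<in> ideal_prod I J"
  then obtain n :: nat and f g where fg: "\<forall>i<n. f i \<in> I \<and> g i \<in> J" "x = (\<Sum>i<n. f i * g i)"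
    by (rule ideal_prodE)
  have "a * x = (\<Sum>i<n. f i * (a * g i))" unfolding fg(2)
    by (simp add: sum_distrib_left algebra_simps)
  moreover have "\<forall>i<n. f i \<in> I \<and> a * g i \<in> J" using fg(1) idealD(3)[OF assms] by blast
  ultimately show "a * x \<in> ideal_prod I J" unfolding ideal_prod_def
    by (intro CollectI exI[of _ n] exI[of _ f] exI[of _ "\<lambda>i. a * g i"]) simp
qed

lemma ideal_prod_sub:
  assumes "is_ideal J" "is_ideal K" "\<And>a b. a \<in> I \<Longrightarrow> b \<in> J \<Longrightarrow> a * b \<in> K"
  shows "ideal_prod I J \<subseteq> K"
proof
  fix x assume "x \<in> ideal_prod I J"
  then obtain n :: nat and f g where fg: "\<forall>i<n. f i \<in> I \<and> g i \<in> J" "x = (\<Sum>i<n. f i * g i)"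
    by (rule ideal_prodE)
  show "x \<in> K" unfolding fg(2) using fg(1) assms(3) by (auto intro!: ideal_sum_fin[OF assms(2)])
qed

lemma pow_ideal: "is_ideal (ideal_pow I n)"
  by (induction n) (auto intro: ideal_prod_ideal ideal_UNIV)

lemma pow_Suc_sub: "is_ideal I \<Longrightarrow> ideal_pow I (Suc n) \<subseteq> ideal_pow I n"
  unfolding ideal_pow.simps(2) by (rule ideal_prod_sub[OF pow_ideal pow_ideal]) (rule idealD(3)[OF pow_ideal])

lemma pow_anti: "is_ideal I \<Longrightarrow> m \<le> n \<Longrightarrow> ideal_pow I n \<subseteq> ideal_pow I m"
proof (induction n)
  case 0 then show ?case by simp
next
  case (Suc n) then show ?case using pow_Suc_sub[of I n] by (auto simp: le_Suc_eq)
qed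

lemma pow_mult: "a \<in> ideal_pow I p \<Longrightarrow> b \<in> ideal_pow I q \<Longrightarrow> a * b \<in> ideal_pow I (p + q)"
proof (induction p arbitrary: a)
  case 0
  then show ?case using idealD(3)[OF pow_ideal] by simp
next
  case (Suc p)
  then obtain n :: nat and f g where fg: "\<forall>i<n. f i \<in> I \<and> g i \<in> ideal_pow I p" "a = (\<Sum>i<n. f i * g i)"
    by (auto elim: ideal_prodE)
  have "a * b = (\<Sum>i<n. f i * (g i * b))" unfolding fg(2) sum_distrib_right
    by (simp add: mult.assoc)
  moreover have "\<forall>i<n. f i \<in> I \<and> g i * b \<in> ideal_pow I (p + q)" using fg(1) Suc by blast
  ultimately show ?case unfolding ideal_prod_def
    by (simp only: ideal_pow.simps add_Suc ideal_prod_def) (intro CollectI exI[of _ n] exI[of _ f] exI[of _ "\<lambda>i. g i * b"], simp)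
qed

lemma pow1: "is_ideal I \<Longrightarrow> ideal_pow I 1 = I"
proof
  assume "is_ideal I"
  show "ideal_pow I 1 \<subseteq> I" using ideal_prod_sub[OF ideal_UNIV \<open>is_ideal I\<close>, of I]
    ideal_mult_right[OF \<open>is_ideal I\<close>] by simp
  show "I \<subseteq> ideal_pow I 1" using ideal_prod_single[of _ I 1 UNIV] by fastforce
qed

lemma pow_power: "is_ideal I \<Longrightarrow> y \<in> I \<Longrightarrow> y ^ n \<in> ideal_pow I n"
proof (induction n)
  case 0 then show ?case by simp
next
  case (Suc n)
  then have "y * y ^ n \<in> ideal_pow I (1 + n)" using pow_mult pow1 by blast
  then show ?case by simp
qed

lemma principal_ideal_ideal: "is_ideal (principal_ideal f)"
  unfolding is_ideal_def principal_ideal_def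
proof (intro conjI ballI allI)
  show "0 \<in> {a * f |a. True}" by (rule CollectI, rule exI[of _ 0]) simp
next
  fix x y assume "x \<in> {a * f |a. True}" "y \<in> {a * f |a. True}"
  then obtain a b where "x = a * f" "y = b * f" by blast
  then show "x + y \<in> {a * f |a. True}" by (intro CollectI exI[of _ "a+b"]) (simp add: algebra_simps)
next
  fix c x assume "x \<in> {a * f |a. True}"
  then obtain a where "x = a * f" by blast
  then show "c * x \<in> {a * f |a. True}" by (intro CollectI exI[of _ "c*a"]) (simp add: algebra_simps)
qed

lemma ideal_sum_ideal:
  assumes "is_ideal A" "is_ideal B" shows "is_ideal (ideal_sum A B)"
  unfolding is_ideal_def ideal_sum_def
proof (intro conjI ballI allI)
  show "0 \<in> {x + y |x y. x \<in> A \<and> y \<in> B}" using idealD(1)[OF assms(1)] idealD(1)[OF assms(2)] by force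
next
  fix x y assume "x \<in> {x + y |x y. x \<in> A \<and> y \<in> B}" "y \<in> {x + y |x y. x \<in> A \<and> y \<in> B}"
  then obtain x1 x2 y1 y2 where "x = x1 + x2" "y = y1 + y2" "x1 \<in> A" "y1 \<in> A" "x2 \<in> B" "y2 \<in> B" by blast
  then show "x + y \<in> {x + y |x y. x \<in> A \<and> y \<in> B}"
    using idealD(2)[OF assms(1)] idealD(2)[OF assms(2)]
    by (intro CollectI exI[of _ "x1+y1"] exI[of _ "x2+y2"]) (auto simp: algebra_simps)
next
  fix a x assume "x \<in> {x + y |x y. x \<in> A \<and> y \<in> B}"
  then obtain x1 x2 where "x = x1 + x2" "x1 \<in> A" "x2 \<in> B" by blast
  moreover have "a * x = a * x1 + a * x2" using \<open>x = x1 + x2\<close> by (simp add: distrib_left)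
  moreover have "a * x1 \<in> A" "a * x2 \<in> B"
    using idealD(3)[OF assms(1)] idealD(3)[OF assms(2)] calculation by auto
  ultimately show "a * x \<in> {x + y |x y. x \<in> A \<and> y \<in> B}" by blast
qed




lemma principalI: "x = c * p \<Longrightarrow> x \<in> principal_ideal p"
  unfolding principal_ideal_def by blast

lemma principalE: "x \<in> principal_ideal p \<Longrightarrow> (\<And>c. x = c * p \<Longrightarrow> P) \<Longrightarrow> P"
  unfolding principal_ideal_def by blast

lemma ideal_sumE: "x \<in> ideal_sum A B \<Longrightarrow> (\<And>a b. x = a + b \<Longrightarrow> a \<in> A \<Longrightarrow> b \<in> B \<Longrightarrow> P) \<Longrightarrow> P"
  unfolding ideal_sum_def by blast

lemma ideal_sumI: "a \<in> A \<Longrightarrow> b \<in> B \<Longrightarrow> a + b \<in> ideal_sum A B"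
  unfolding ideal_sum_def by blast

lemma div_lemma:
  assumes I: "is_ideal I" and nzd: "non_zero_divisor p"
    and AR: "\<forall>m. ideal_pow I (m + k) \<inter> principal_ideal p
                 = ideal_prod (ideal_pow I m) (ideal_pow I k \<inter> principal_ideal p)"
    and x: "x * p \<in> ideal_pow I (m + k)"
  shows "x \<in> ideal_pow I m"
proof -
  have "x * p \<in> ideal_prod (ideal_pow I m) (ideal_pow I k \<inter> principal_ideal p)"
    using AR x principalI[of "x * p" x p] by blast
  then obtain n :: nat and a b where ab: "\<forall>i<n. a i \<in> ideal_pow I m \<and> b i \<in> ideal_pow I k \<inter> principal_ideal p"
    "x * p = (\<Sum>i<n. a i * b i)" by (rule ideal_prodE)
  have "\<forall>i. \<exists>d. i < n \<longrightarrow> b i = d * p"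
    using ab(1) unfolding principal_ideal_def by blast
  then obtain d where d: "\<And>i. i < n \<Longrightarrow> b i = d i * p" by metis
  have "(\<Sum>i<n. a i * b i) = (\<Sum>i<n. a i * d i) * p"
    by (simp add: sum_distrib_right d mult.assoc)
  then have "(x - (\<Sum>i<n. a i * d i)) * p = 0" using ab(2) by (simp add: algebra_simps)
  then have "x = (\<Sum>i<n. a i * d i)" using nzd unfolding non_zero_divisor_def by auto
  also have "\<dots> \<in> ideal_pow I m"
    using ab(1) by (auto intro!: ideal_sum_fin[OF pow_ideal] ideal_mult_right[OF pow_ideal])
  finally show ?thesis .
qed

lemma geom: "(1 - y) * (\<Sum>i<n. y ^ i) = (1::'a::comm_ring_1) - y ^ n"
proof (induction n)
  case 0 then show ?case by simp
next
  case (Suc n)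
  have "(1 - y) * (\<Sum>i<Suc n. y ^ i) = (1 - y) * (\<Sum>i<n. y ^ i) + (1 - y) * y ^ n"
    by (simp add: distrib_left)
  also have "\<dots> = 1 - y ^ n + (1 - y) * y ^ n" using Suc by simp
  also have "\<dots> = 1 - y ^ Suc n" by (simp add: algebra_simps)
  finally show ?case .
qed

lemma separated: "adically_complete I \<Longrightarrow> (\<And>n. x \<in> ideal_pow I n) \<Longrightarrow> x = 0"
  unfolding adically_complete_def by blast

lemma unit_one_minus:
  assumes I: "is_ideal I" and C: "adically_complete I" and y: "y \<in> I"
  shows "unit_elem (1 - y)"
proof -
  define x where "x n = (\<Sum>i<n. y ^ i)" for n
  have "\<forall>n. x (Suc n) - x n \<in> ideal_pow I n"
    using pow_power[OF I y] by (simp add: x_def)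
  then obtain z where z: "\<And>n. z - x n \<in> ideal_pow I n"
    using C unfolding adically_complete_def by blast
  have "(1 - y) * z - 1 \<in> ideal_pow I n" for n
  proof -
    have "(1 - y) * z - 1 = (1 - y) * (z - x n) - y ^ n"
      using geom[of y n] by (simp add: x_def algebra_simps)
    then show ?thesis using z[of n] pow_power[OF I y, of n]
      by (auto intro!: ideal_diff[OF pow_ideal] idealD(3)[OF pow_ideal])
  qed
  then have "(1 - y) * z - 1 = 0" using separated[OF C] by blast
  then show ?thesis unfolding unit_elem_def by (intro exI[of _ z]) simp
qed

lemma part1:
  assumes I: "is_ideal I" and C: "adically_complete I" and nzd: "non_zero_divisor f"
    and AR: "\<forall>m. ideal_pow I (m + k) \<inter> principal_ideal f
                 = ideal_prod (ideal_pow I m) (ideal_pow I k \<inter> principal_ideal f)"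
    and m: "m \<ge> 1"
    and eq: "ideal_sum (principal_ideal h) (ideal_pow I (m + k))
          = ideal_sum (principal_ideal f) (ideal_pow I (m + k))"
  shows "\<exists>t. unit_elem t \<and> h - t * f \<in> ideal_pow I (m + k)"
proof -
  have "h \<in> ideal_sum (principal_ideal h) (ideal_pow I (m + k))"
    using ideal_sumI[OF principalI[of h 1 h] idealD(1)[OF pow_ideal]] by simp
  then have "h \<in> ideal_sum (principal_ideal f) (ideal_pow I (m + k))" using eq by simp
  then obtain a i where hi: "h = a * f + i" "i \<in> ideal_pow I (m + k)"
    by (auto elim!: ideal_sumE principalE)
  have "f \<in> ideal_sum (principal_ideal f) (ideal_pow I (m + k))"
    using ideal_sumI[OF principalI[of f 1 f] idealD(1)[OF pow_ideal]] by simp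
  then have "f \<in> ideal_sum (principal_ideal h) (ideal_pow I (m + k))" using eq by simp
  then obtain b i' where fi: "f = b * h + i'" "i' \<in> ideal_pow I (m + k)"
    by (auto elim!: ideal_sumE principalE)
  have "(1 - b * a) * f = f - b * (a * f)" by (simp add: algebra_simps)
  also have "\<dots> = f - b * (h - i)" using hi(1) by simp
  also have "\<dots> = b * i + i'" using fi(1) by (simp add: algebra_simps)
  also have "\<dots> \<in> ideal_pow I (m + k)"
    using hi(2) fi(2) by (intro idealD(2)[OF pow_ideal] idealD(3)[OF pow_ideal])
  finally have "1 - b * a \<in> ideal_pow I m" by (rule div_lemma[OF I nzd AR])
  then have "1 - b * a \<in> I" using pow_anti[OF I m] pow1[OF I] by blast
  then have "unit_elem (1 - (1 - b * a))" by (rule unit_one_minus[OF I C])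
  then obtain z where "b * a * z = 1" unfolding unit_elem_def by auto
  then have "unit_elem a" unfolding unit_elem_def by (intro exI[of _ "b * z"]) (simp add: algebra_simps)
  moreover have "h - a * f \<in> ideal_pow I (m + k)" using hi by simp
  ultimately show ?thesis by blast
qed

lemma part2:
  assumes I: "is_ideal I" and t: "unit_elem t" "h - t * f \<in> ideal_pow I M"
    and t': "unit_elem t'" "h' - t' * f \<in> ideal_pow I M"
  shows "\<exists>v. unit_elem v \<and> h' - v * h \<in> ideal_pow I M"
proof -
  obtain u where u: "t * u = 1" using t(1) unfolding unit_elem_def by auto
  obtain u' where u': "t' * u' = 1" using t'(1) unfolding unit_elem_def by auto
  have "h' - t' * u * h = (h' - t' * f) - (t' * u) * (h - t * f)"
    using u by (simp add: algebra_simps)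
  also have "\<dots> \<in> ideal_pow I M"
    by (rule ideal_diff[OF pow_ideal t'(2) idealD(3)[OF pow_ideal t(2)]])
  finally have "h' - t' * u * h \<in> ideal_pow I M" .
  moreover have "unit_elem (t' * u)" unfolding unit_elem_def
  proof (intro exI[of _ "u' * t"])
    have "t' * u * (u' * t) = (t * u) * (t' * u')" by (simp add: ac_simps)
    then show "t' * u * (u' * t) = 1" using u u' by simp
  qed
  ultimately show ?thesis by blast
qed




lemma ideal_Int: "is_ideal A \<Longrightarrow> is_ideal B \<Longrightarrow> is_ideal (A \<inter> B)"
  unfolding is_ideal_def by auto

lemma claimA:
  assumes I: "is_ideal I" and nzd: "non_zero_divisor f"
    and AR: "\<forall>m. ideal_pow I (m + k) \<inter> principal_ideal f
                 = ideal_prod (ideal_pow I m) (ideal_pow I k \<inter> principal_ideal f)"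
    and u: "t * u = 1" and gi: "g - t * f \<in> ideal_pow I (Suc k)"
  shows "x * g \<in> ideal_pow I (m + k) \<Longrightarrow> x \<in> ideal_pow I m"
proof (induction m arbitrary: x)
  case 0 then show ?case by simp
next
  case (Suc m)
  have "x * g \<in> ideal_pow I (m + k)" using Suc.prems pow_anti[OF I, of "m + k" "Suc m + k"] by auto
  then have xm: "x \<in> ideal_pow I m" by (rule Suc.IH)
  have "x * (g - t * f) \<in> ideal_pow I (m + Suc k)" by (rule pow_mult[OF xm gi])
  then have "x * g - x * (g - t * f) \<in> ideal_pow I (Suc m + k)"
    using Suc.prems by (intro ideal_diff[OF pow_ideal]) simp_all
  then have "(x * t) * f \<in> ideal_pow I (Suc m + k)" by (simp add: algebra_simps)
  then have "x * t \<in> ideal_pow I (Suc m)" by (rule div_lemma[OF I nzd AR])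
  then have "(x * t) * u \<in> ideal_pow I (Suc m)" by (rule ideal_mult_right[OF pow_ideal])
  then show ?case using u by (simp add: mult.assoc)
qed

lemma part3:
  assumes I: "is_ideal I" and nzd: "non_zero_divisor f"
    and AR: "\<forall>m. ideal_pow I (m + k) \<inter> principal_ideal f
                 = ideal_prod (ideal_pow I m) (ideal_pow I k \<inter> principal_ideal f)"
    and u: "t * u = 1" and gi: "g - t * f \<in> ideal_pow I (Suc k)"
  shows "ideal_pow I (m + k) \<inter> principal_ideal g
               = ideal_prod (ideal_pow I m) (ideal_pow I k \<inter> principal_ideal g)"
proof
  show "ideal_prod (ideal_pow I m) (ideal_pow I k \<inter> principal_ideal g)
      \<subseteq> ideal_pow I (m + k) \<inter> principal_ideal g"
  proof (rule ideal_prod_sub)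
    show "is_ideal (ideal_pow I k \<inter> principal_ideal g)"
      by (rule ideal_Int[OF pow_ideal principal_ideal_ideal])
    show "is_ideal (ideal_pow I (m + k) \<inter> principal_ideal g)"
      by (rule ideal_Int[OF pow_ideal principal_ideal_ideal])
    fix a b assume "a \<in> ideal_pow I m" "b \<in> ideal_pow I k \<inter> principal_ideal g"
    then show "a * b \<in> ideal_pow I (m + k) \<inter> principal_ideal g"
      using pow_mult[of a I m b k] idealD(3)[OF principal_ideal_ideal] by auto
  qed
next
  show "ideal_pow I (m + k) \<inter> principal_ideal g
      \<subseteq> ideal_prod (ideal_pow I m) (ideal_pow I k \<inter> principal_ideal g)"
  proof
    fix y assume y: "y \<in> ideal_pow I (m + k) \<inter> principal_ideal g"
    then obtain c where c: "y = c * g" by (auto elim: principalE)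
    show "y \<in> ideal_prod (ideal_pow I m) (ideal_pow I k \<inter> principal_ideal g)"
    proof (cases m)
      case 0
      then have "1 * y \<in> ideal_prod (ideal_pow I m) (ideal_pow I k \<inter> principal_ideal g)"
        using y by (intro ideal_prod_single) auto
      then show ?thesis by simp
    next
      case (Suc m')
      have "c * g \<in> ideal_pow I (m' + k)" using y c Suc pow_anti[OF I, of "m' + k" "m + k"] by auto
      then have cm: "c \<in> ideal_pow I m'" by (rule claimA[OF I nzd AR u gi])
      have "c * (g - t * f) \<in> ideal_pow I (m' + Suc k)" by (rule pow_mult[OF cm gi])
      then have "c * g - c * (g - t * f) \<in> ideal_pow I (m + k)"
        using y c Suc by (intro ideal_diff[OF pow_ideal]) simp_all
      then have "(c * t) * f \<in> ideal_pow I (m + k)" by (simp add: algebra_simps)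
      then have "(c * t) * f \<in> ideal_pow I (m + k) \<inter> principal_ideal f"
        using principalI[of "(c * t) * f" "c * t" f] by blast
      then have "(c * t) * f \<in> ideal_prod (ideal_pow I m) (ideal_pow I k \<inter> principal_ideal f)"
        using AR by blast
      then obtain n :: nat and a b where ab: "\<forall>i<n. a i \<in> ideal_pow I m \<and> b i \<in> ideal_pow I k \<inter> principal_ideal f"
        "(c * t) * f = (\<Sum>i<n. a i * b i)" by (rule ideal_prodE)
      have "\<forall>i. \<exists>d. i < n \<longrightarrow> b i = d * f"
        using ab(1) unfolding principal_ideal_def by blast
      then obtain d where d: "\<And>i. i < n \<Longrightarrow> b i = d i * f" by metis
      have "(\<Sum>i<n. a i * b i) = (\<Sum>i<n. a i * d i) * f"
        by (simp add: sum_distrib_right d mult.assoc)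
      then have "(c * t - (\<Sum>i<n. a i * d i)) * f = 0" using ab(2) by (simp add: algebra_simps)
      then have ct: "c * t = (\<Sum>i<n. a i * d i)" using nzd unfolding non_zero_divisor_def by auto
      have "y = (c * t) * u * g" using c u by (simp add: mult.assoc)
      also have "\<dots> = (\<Sum>i<n. a i * (u * d i * g))"
        unfolding ct sum_distrib_right by (simp add: ac_simps)
      finally have yeq: "y = (\<Sum>i<n. a i * (u * d i * g))" .
      have "\<forall>i<n. a i \<in> ideal_pow I m \<and> u * d i * g \<in> ideal_pow I k \<inter> principal_ideal g"
      proof (intro allI impI conjI)
        fix i assume i: "i < n"
        show "a i \<in> ideal_pow I m" using ab(1) i by blast
        have pg: "u * d i * g \<in> principal_ideal g" by (rule principalI) simp
        have e0: "(u * d i) * (g - t * f) = u * d i * g - (t * u) * (d i * f)"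
          by (simp add: algebra_simps)
        have e1: "(u * d i) * (g - t * f) = u * d i * g - d i * f"
          unfolding e0 u by simp
        have "u * d i * g = d i * f + (u * d i) * (g - t * f)"
          unfolding e1 by simp
        moreover have "d i * f \<in> ideal_pow I k" using ab(1) d i by auto
        moreover have "(u * d i) * (g - t * f) \<in> ideal_pow I k"
          using idealD(3)[OF pow_ideal gi] pow_anti[OF I, of k "Suc k"] by auto
        ultimately have "u * d i * g \<in> ideal_pow I k" using idealD(2)[OF pow_ideal] by metis
        then show "u * d i * g \<in> ideal_pow I k \<inter> principal_ideal g" using pg by blast
      qed
      then show ?thesis unfolding yeq ideal_prod_def
        by (intro CollectI exI[of _ n] exI[of _ a] exI[of _ "\<lambda>i. u * d i * g"]) simp
    qed
  qed
qed

lemma g_nzd: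
  assumes I: "is_ideal I" and C: "adically_complete I" and nzd: "non_zero_divisor f"
    and AR: "\<forall>m. ideal_pow I (m + k) \<inter> principal_ideal f
                 = ideal_prod (ideal_pow I m) (ideal_pow I k \<inter> principal_ideal f)"
    and u: "t * u = 1" and gi: "g - t * f \<in> ideal_pow I (Suc k)"
  shows "non_zero_divisor g"
  unfolding non_zero_divisor_def
proof (intro allI impI)
  fix a assume "a * g = 0"
  then have "a \<in> ideal_pow I m" for m
    using claimA[OF I nzd AR u gi, of a m] idealD(1)[OF pow_ideal, of I "m + k"] \<open>a * g = 0\<close> by simp
  then show "a = 0" using separated[OF C] by blast
qed




lemma pow_diff_factor: "\<exists>Q. u ^ N - d ^ N = (u - d) * (Q::'a::comm_ring_1)"
proof (induction N)
  case 0 then show ?case by (intro exI[of _ 0]) simp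
next
  case (Suc N)
  then obtain Q where Q: "u ^ N - d ^ N = (u - d) * Q" by blast
  have "u ^ Suc N - d ^ Suc N = u * (u ^ N - d ^ N) + (u - d) * d ^ N"
    by (simp add: algebra_simps)
  also have "\<dots> = (u - d) * (u * Q + d ^ N)" unfolding Q by (simp add: algebra_simps)
  finally show ?case by blast
qed

lemma local_alg:
  fixes R1 R2 R3 A B Bt Cc p1 P a eps c1 e1 g j :: "'a::comm_ring_1"
  assumes I: "is_ideal I" and NK: "Suc k \<le> N" and Nn: "n \<le> N"
    and h1: "R1 * (B * p1 - Cc * P) \<in> ideal_pow I N"
    and h2: "R2 * (A * g - c1 * p1) \<in> ideal_pow I N"
    and h3: "R3 * (Bt * j - e1 * p1) \<in> ideal_pow I N"
    and P: "P = a * g + eps" and eps: "eps \<in> ideal_pow I (Suc k)"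
    and divg: "\<forall>x. x * g \<in> ideal_pow I (Suc k) \<longrightarrow> x \<in> I"
  shows "\<exists>y. R2 * R3 * (R1 * R2 * B * A) ^ N * Bt * j - y * g \<in> ideal_pow I n"
proof -
  note PI = pow_ideal[of I N]
  have subN: "ideal_pow I N \<subseteq> ideal_pow I (Suc k)" by (rule pow_anti[OF I NK])
  have X: "R2 * c1 * (R1 * (B * p1 - Cc * P)) + R1 * B * (R2 * (A * g - c1 * p1)) \<in> ideal_pow I N"
    by (intro idealD(2)[OF PI] idealD(3)[OF PI] h1 h2)
  have "R2 * c1 * (R1 * (B * p1 - Cc * P)) + R1 * B * (R2 * (A * g - c1 * p1))
      = (R1 * R2 * (B * A - c1 * Cc * a)) * g - R1 * R2 * c1 * Cc * eps"
    unfolding P by (simp add: algebra_simps)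
  with X have "(R1 * R2 * (B * A - c1 * Cc * a)) * g - R1 * R2 * c1 * Cc * eps \<in> ideal_pow I (Suc k)"
    using subN by auto
  then have "(R1 * R2 * (B * A - c1 * Cc * a)) * g - R1 * R2 * c1 * Cc * eps + R1 * R2 * c1 * Cc * eps
      \<in> ideal_pow I (Suc k)"
    by (intro idealD(2)[OF pow_ideal] idealD(3)[OF pow_ideal] eps)
  then have "(R1 * R2 * (B * A - c1 * Cc * a)) * g \<in> ideal_pow I (Suc k)" by simp
  then have dI: "R1 * R2 * (B * A - c1 * Cc * a) \<in> I" using divg by blast
  define u where "u = R1 * R2 * B * A"
  define d where "d = R1 * R2 * (B * A - c1 * Cc * a)"
  define Y where "Y = R1 * R2 * Cc * a * A * e1"
  have T: "R1 * R2 * Cc * a * (R2 * c1 * (R3 * (Bt * j - e1 * p1)) - R3 * e1 * (R2 * (A * g - c1 * p1)))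
     \<in> ideal_pow I N"
    by (intro idealD(3)[OF PI] ideal_diff[OF PI] h2 h3)
  have "R1 * R2 * Cc * a * (R2 * c1 * (R3 * (Bt * j - e1 * p1)) - R3 * e1 * (R2 * (A * g - c1 * p1)))
     = R2 * R3 * ((u - d) * Bt * j - Y * g)"
    unfolding u_def d_def Y_def by (simp add: algebra_simps)
  with T have T': "R2 * R3 * ((u - d) * Bt * j - Y * g) \<in> ideal_pow I N" by simp
  obtain Q where Q: "u ^ N - d ^ N = (u - d) * Q" using pow_diff_factor by blast
  have dN: "d ^ N \<in> ideal_pow I N" using pow_power[OF I dI] unfolding d_def .
  have "Q * (R2 * R3 * ((u - d) * Bt * j - Y * g)) + R2 * R3 * Bt * j * d ^ N \<in> ideal_pow I N"
    by (intro idealD(2)[OF PI] idealD(3)[OF PI] T' dN)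
  moreover have "Q * (R2 * R3 * ((u - d) * Bt * j - Y * g)) + R2 * R3 * Bt * j * d ^ N
     = R2 * R3 * u ^ N * Bt * j - (R2 * R3 * Q * Y) * g"
  proof -
    have "Q * (R2 * R3 * ((u - d) * Bt * j - Y * g)) = R2 * R3 * Bt * j * ((u - d) * Q) - (R2 * R3 * Q * Y) * g"
      by (simp add: algebra_simps)
    also have "\<dots> = R2 * R3 * Bt * j * (u ^ N - d ^ N) - (R2 * R3 * Q * Y) * g" unfolding Q ..
    finally show ?thesis by (simp add: algebra_simps)
  qed
  ultimately have "R2 * R3 * u ^ N * Bt * j - (R2 * R3 * Q * Y) * g \<in> ideal_pow I n"
    using pow_anti[OF I Nn] by auto
  then show ?thesis unfolding u_def by blast
qed

lemma foldr_fst_in: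
  assumes J: "is_ideal J" and L: "\<forall>x\<in>set L. fst (x n) \<in> J"
  shows "fst (foldr (cl_add s) L cl_zero n) \<in> J"
  using L
proof (induction L)
  case Nil then show ?case by (simp add: cl_zero_def idealD(1)[OF J])
next
  case (Cons x L)
  then show ?case
    by (simp add: cl_add_def loc_add_def idealD(2)[OF J] idealD(3)[OF J])
qed



lemma rad_one:
  assumes K: "is_ideal K" and I: "is_ideal I"
    and powS: "\<forall>s\<in>S. \<exists>e. s ^ e \<in> K" and powI: "\<forall>x\<in>I. \<exists>e. x ^ e \<in> K"
    and cov: "ideal_sum (ideal_gen S) I = UNIV"
  shows "1 \<in> K"
proof -
  define R where "R = {x. \<exists>e. x ^ e \<in> K}"
  have R: "is_ideal R" unfolding is_ideal_def
  proof (intro conjI ballI allI)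
    show "0 \<in> R" unfolding R_def using idealD(1)[OF K] by (intro CollectI exI[of _ 1]) simp
  next
    fix x y assume "x \<in> R" "y \<in> R"
    then obtain a b where a: "x ^ a \<in> K" and b: "y ^ b \<in> K" unfolding R_def by blast
    have "(x + y) ^ (a + b) = (\<Sum>i\<le>a + b. of_nat ((a + b) choose i) * x ^ i * y ^ (a + b - i))"
      by (rule binomial_ring)
    also have "\<dots> \<in> K"
    proof (rule ideal_sum_fin[OF K], simp)
      fix i assume "i \<in> {..a + b}"
      show "of_nat ((a + b) choose i) * x ^ i * y ^ (a + b - i) \<in> K"
      proof (cases "a \<le> i")
        case True
        then have "x ^ i = x ^ (i - a) * x ^ a" by (simp add: power_add[symmetric])
        then have "of_nat ((a + b) choose i) * x ^ i * y ^ (a + b - i)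
            = (of_nat ((a + b) choose i) * x ^ (i - a) * y ^ (a + b - i)) * x ^ a"
          by (simp add: ac_simps)
        then show ?thesis using ideal_mult_right[OF K a] idealD(3)[OF K a] by simp
      next
        case False
        then have "y ^ (a + b - i) = y ^ (a - i) * y ^ b" by (simp add: power_add[symmetric])
        then have "of_nat ((a + b) choose i) * x ^ i * y ^ (a + b - i)
            = (of_nat ((a + b) choose i) * x ^ i * y ^ (a - i)) * y ^ b"
          by (simp add: ac_simps)
        then show ?thesis using idealD(3)[OF K b] by simp
      qed
    qed
    finally show "x + y \<in> R" unfolding R_def by blast
  next
    fix c x assume "x \<in> R"
    then obtain a where a: "x ^ a \<in> K" unfolding R_def by blast
    have "(c * x) ^ a = c ^ a * x ^ a" by (simp add: power_mult_distrib)
    then have "(c * x) ^ a \<in> K" using idealD(3)[OF K a] by simp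
    then show "c * x \<in> R" unfolding R_def by blast
  qed
  have genR: "ideal_gen S \<subseteq> R"
  proof
    fix x assume "x \<in> ideal_gen S"
    then obtain n :: nat and c s where cs: "\<forall>i<n. s i \<in> S" "x = (\<Sum>i<n. c i * s i)"
      unfolding ideal_gen_def by blast
    have "\<forall>i<n. s i \<in> R" using cs(1) powS unfolding R_def by blast
    then show "x \<in> R" unfolding cs(2) by (auto intro!: ideal_sum_fin[OF R] idealD(3)[OF R])
  qed
  have IR: "I \<subseteq> R" using powI unfolding R_def by blast
  have "1 \<in> ideal_sum (ideal_gen S) I" using cov by simp
  then obtain a b where "1 = a + b" "a \<in> ideal_gen S" "b \<in> I" by (rule ideal_sumE)
  then have "1 = a + b" "a \<in> R" "b \<in> R" using genR IR by auto
  then have "1 \<in> R" using idealD(2)[OF R, of a b] by simp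
  then show ?thesis unfolding R_def by simp
qed

lemma closed_principal:
  assumes I: "is_ideal I" and C: "adically_complete I"
    and divg: "\<forall>x m. x * g \<in> ideal_pow I (m + k) \<longrightarrow> x \<in> ideal_pow I m"
    and jn: "\<forall>n. j \<in> ideal_sum (principal_ideal g) (ideal_pow I n)"
  shows "j \<in> principal_ideal g"
proof -
  have "\<forall>n. \<exists>c. j - c * g \<in> ideal_pow I n"
  proof
    fix n
    from jn obtain a b where "j = a + b" "a \<in> principal_ideal g" "b \<in> ideal_pow I n"
      by (blast elim: ideal_sumE)
    then obtain cc where "j = cc * g + b" by (auto elim!: principalE)
    then have "j - cc * g \<in> ideal_pow I n" using \<open>b \<in> ideal_pow I n\<close> by simp
    then show "\<exists>c. j - c * g \<in> ideal_pow I n" by blast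
  qed
  then obtain c where c: "\<And>n. j - c n * g \<in> ideal_pow I n" by metis
  define x where "x n = c (n + k)" for n
  have "\<forall>n. x (Suc n) - x n \<in> ideal_pow I n"
  proof
    fix n
    have "(x (Suc n) - x n) * g = (j - c (n + k) * g) - (j - c (Suc n + k) * g)"
      unfolding x_def by (simp add: algebra_simps)
    also have "\<dots> \<in> ideal_pow I (n + k)"
    proof (rule ideal_diff[OF pow_ideal])
      show "j - c (n + k) * g \<in> ideal_pow I (n + k)" by (rule c)
      show "j - c (Suc n + k) * g \<in> ideal_pow I (n + k)"
        using c[of "Suc n + k"] pow_anti[OF I, of "n + k" "Suc n + k"] by auto
    qed
    finally show "x (Suc n) - x n \<in> ideal_pow I n" using divg by blast
  qed
  then obtain y where y: "\<And>n. y - x n \<in> ideal_pow I n"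
    using C unfolding adically_complete_def by blast
  have "j - y * g \<in> ideal_pow I n" for n
  proof -
    have "j - y * g = (j - c (n + k) * g) - (y - x n) * g" unfolding x_def by (simp add: algebra_simps)
    also have "\<dots> \<in> ideal_pow I n"
    proof (rule ideal_diff[OF pow_ideal])
      show "j - c (n + k) * g \<in> ideal_pow I n"
        using c[of "n + k"] pow_anti[OF I, of n "n + k"] by auto
      show "(y - x n) * g \<in> ideal_pow I n" by (rule ideal_mult_right[OF pow_ideal y])
    qed
    finally show ?thesis .
  qed
  then have "j - y * g = 0" using separated[OF C] by blast
  then show ?thesis by (intro principalI[of j y]) simp
qed




lemma local_step:
  assumes I: "is_ideal I" and J: "is_ideal J" and gJ: "g \<in> J"
    and Jsub: "J \<subseteq> ideal_sum (principal_ideal g) (ideal_pow I (Suc k))"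
    and divg: "\<forall>x. x * g \<in> ideal_pow I (Suc k) \<longrightarrow> x \<in> I"
    and lp: "locally_principal_nzd I s J" and j: "j \<in> J"
  shows "\<exists>\<rho> y. s ^ \<rho> * j - y * g \<in> ideal_pow I n"
proof -
  define N where "N = n + Suc k"
  obtain \<phi> where hj: "\<forall>j\<in>J. \<exists>c. cl_elem I s c \<and> cl_eq I s (cl_of j) (cl_mul c \<phi>)"
    and ex: "\<exists>m c js. (\<forall>i<m. cl_elem I s (c i) \<and> js i \<in> J) \<and>
           cl_eq I s \<phi> (foldr (cl_add s) (map (\<lambda>i. cl_mul (c i) (cl_of (js i))) [0..<m]) cl_zero)"
    using lp unfolding locally_principal_nzd_def by blast
  then obtain mm cc js where js: "\<forall>i<mm. cl_elem I s (cc i) \<and> js i \<in> J"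
    and eqphi: "cl_eq I s \<phi> (foldr (cl_add s) (map (\<lambda>i. cl_mul (cc i) (cl_of (js i))) [0..<mm]) cl_zero)"
    by blast
  define F where "F = foldr (cl_add s) (map (\<lambda>i. cl_mul (cc i) (cl_of (js i))) [0..<mm]) cl_zero"
  have PJ: "fst (F N) \<in> J" unfolding F_def
    by (rule foldr_fst_in[OF J]) (use js in \<open>auto simp: cl_mul_def cl_of_def loc_mul_def intro!: idealD(3)[OF J]\<close>)
  have "loc_eq I s N (\<phi> N) (F N)" using eqphi unfolding F_def[symmetric] cl_eq_def by blast
  then obtain r1 where h1: "s ^ r1 * (s ^ snd (F N) * fst (\<phi> N) - s ^ snd (\<phi> N) * fst (F N)) \<in> ideal_pow I N"
    unfolding loc_eq_def by blast
  obtain cg where "cl_eq I s (cl_of g) (cl_mul cg \<phi>)" using hj gJ by blast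
  then have "loc_eq I s N (cl_of g N) (cl_mul cg \<phi> N)" unfolding cl_eq_def by blast
  then obtain r2 where h2: "s ^ r2 * (s ^ (snd (cg N) + snd (\<phi> N)) * g - fst (cg N) * fst (\<phi> N)) \<in> ideal_pow I N"
    unfolding loc_eq_def cl_of_def cl_mul_def loc_mul_def by auto
  obtain ce where "cl_eq I s (cl_of j) (cl_mul ce \<phi>)" using hj j by blast
  then have "loc_eq I s N (cl_of j N) (cl_mul ce \<phi> N)" unfolding cl_eq_def by blast
  then obtain r3 where h3: "s ^ r3 * (s ^ (snd (ce N) + snd (\<phi> N)) * j - fst (ce N) * fst (\<phi> N)) \<in> ideal_pow I N"
    unfolding loc_eq_def cl_of_def cl_mul_def loc_mul_def by auto
  obtain a eps where P: "fst (F N) = a * g + eps" and eps: "eps \<in> ideal_pow I (Suc k)"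
    using Jsub PJ by (auto elim!: ideal_sumE principalE)
  obtain y where y: "s ^ r2 * s ^ r3 * (s ^ r1 * s ^ r2 * s ^ snd (F N) * s ^ (snd (cg N) + snd (\<phi> N))) ^ N
      * s ^ (snd (ce N) + snd (\<phi> N)) * j - y * g \<in> ideal_pow I n"
  proof -
    have nN: "n \<le> N" "Suc k \<le> N" by (simp_all add: N_def)
    show ?thesis using local_alg[OF I nN(2) nN(1) h1 h2 h3 P eps divg] that by blast
  qed
  define \<rho> where "\<rho> = r2 + r3 + (r1 + r2 + snd (F N) + (snd (cg N) + snd (\<phi> N))) * N + (snd (ce N) + snd (\<phi> N))"
  have "s ^ r2 * s ^ r3 * (s ^ r1 * s ^ r2 * s ^ snd (F N) * s ^ (snd (cg N) + snd (\<phi> N))) ^ N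
      * s ^ (snd (ce N) + snd (\<phi> N)) = s ^ \<rho>"
    unfolding \<rho>_def by (simp only: power_add power_mult mult.assoc)
  then show ?thesis using y by metis
qed


lemma part4:
  assumes I: "is_ideal I" and C: "adically_complete I" and nzd: "non_zero_divisor f"
    and AR: "\<forall>m. ideal_pow I (m + k) \<inter> principal_ideal f
                 = ideal_prod (ideal_pow I m) (ideal_pow I k \<inter> principal_ideal f)"
    and cart: "cartier_divisor I J"
    and eq: "ideal_sum J (ideal_pow I (k + 1)) = ideal_sum (principal_ideal f) (ideal_pow I (k + 1))"
  shows "\<exists>g. non_zero_divisor g \<and> J = principal_ideal g"
proof -
  obtain S where J: "is_ideal J" and cov: "ideal_sum (ideal_gen S) I = UNIV"
    and lp: "\<forall>s\<in>S. locally_principal_nzd I s J"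
    using cart unfolding cartier_divisor_def by blast
  have "f \<in> ideal_sum (principal_ideal f) (ideal_pow I (k + 1))"
    using ideal_sumI[OF principalI[of f 1 f] idealD(1)[OF pow_ideal], of I "k + 1"]
    by (metis add.right_neutral mult_1)
  then have "f \<in> ideal_sum J (ideal_pow I (k + 1))" using eq by simp
  then obtain g eps where fg: "f = g + eps" and gJ: "g \<in> J" and eps: "eps \<in> ideal_pow I (Suc k)"
    by (auto elim!: ideal_sumE)
  have u: "(1::'a) * 1 = 1" by simp
  have gi: "g - 1 * f \<in> ideal_pow I (Suc k)" using fg ideal_neg[OF pow_ideal eps] by simp
  have gnzd: "non_zero_divisor g" by (rule g_nzd[OF I C nzd AR u gi])
  have divg: "\<forall>x m. x * g \<in> ideal_pow I (m + k) \<longrightarrow> x \<in> ideal_pow I m"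
    using claimA[OF I nzd AR u gi] by blast
  have divg1: "\<forall>x. x * g \<in> ideal_pow I (Suc k) \<longrightarrow> x \<in> I"
    using divg pow1[OF I] by (metis plus_1_eq_Suc)
  have Jsub: "J \<subseteq> ideal_sum (principal_ideal g) (ideal_pow I (Suc k))"
  proof
    fix j assume "j \<in> J"
    then have "j + 0 \<in> ideal_sum J (ideal_pow I (k + 1))"
      by (intro ideal_sumI idealD(1)[OF pow_ideal])
    then have "j \<in> ideal_sum (principal_ideal f) (ideal_pow I (k + 1))" using eq by simp
    then obtain c i where ci: "j = c * f + i" "i \<in> ideal_pow I (Suc k)"
      by (auto elim!: ideal_sumE principalE)
    have "j = c * g + (c * eps + i)" using ci(1) fg by (simp add: algebra_simps)
    moreover have "c * eps + i \<in> ideal_pow I (Suc k)"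
      by (intro idealD(2)[OF pow_ideal] idealD(3)[OF pow_ideal] eps ci(2))
    ultimately show "j \<in> ideal_sum (principal_ideal g) (ideal_pow I (Suc k))"
      using ideal_sumI[OF principalI[of "c * g" c g]] by metis
  qed
  have "J = principal_ideal g"
  proof
    show "principal_ideal g \<subseteq> J" using gJ idealD(3)[OF J] by (auto elim!: principalE)
  next
    show "J \<subseteq> principal_ideal g"
    proof
      fix j assume j: "j \<in> J"
      have "j \<in> ideal_sum (principal_ideal g) (ideal_pow I n)" for n
      proof -
        define L where "L = ideal_sum (principal_ideal g) (ideal_pow I n)"
        have L: "is_ideal L" unfolding L_def by (rule ideal_sum_ideal[OF principal_ideal_ideal pow_ideal])
        have powL: "x \<in> ideal_pow I n \<Longrightarrow> x \<in> L" for x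
          unfolding L_def using ideal_sumI[OF idealD(1)[OF principal_ideal_ideal], of x "ideal_pow I n" g] by simp
        define K where "K = {x. x * j \<in> L}"
        have K: "is_ideal K" unfolding K_def is_ideal_def
        proof (intro conjI ballI allI)
          show "0 \<in> {x. x * j \<in> L}" using idealD(1)[OF L] by simp
        next
          fix x y assume "x \<in> {x. x * j \<in> L}" "y \<in> {x. x * j \<in> L}"
          then have "x * j + y * j \<in> L" using idealD(2)[OF L] by simp
          then show "x + y \<in> {x. x * j \<in> L}" by (simp add: distrib_right)
        next
          fix a x assume "x \<in> {x. x * j \<in> L}"
          then have "a * (x * j) \<in> L" using idealD(3)[OF L] by simp
          then show "a * x \<in> {x. x * j \<in> L}" by (simp add: mult.assoc)
        qed
        have "1 \<in> K"
        proof (rule rad_one[OF K I _ _ cov])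
          show "\<forall>s\<in>S. \<exists>e. s ^ e \<in> K"
          proof
            fix s assume "s \<in> S"
            then obtain \<rho> y where "s ^ \<rho> * j - y * g \<in> ideal_pow I n"
              using local_step[OF I J gJ Jsub divg1 _ j] lp by blast
            then have "y * g + (s ^ \<rho> * j - y * g) \<in> L"
              using idealD(2)[OF L] powL idealD(3)[OF L] principalI[of "y * g" y g]
                unfolding L_def by (metis ideal_sumI)
            then show "\<exists>e. s ^ e \<in> K" unfolding K_def by auto
          qed
          show "\<forall>x\<in>I. \<exists>e. x ^ e \<in> K"
          proof
            fix x assume "x \<in> I"
            then have "x ^ n * j \<in> ideal_pow I n"
              by (rule ideal_mult_right[OF pow_ideal pow_power[OF I]])
            then show "\<exists>e. x ^ e \<in> K" unfolding K_def using powL by blast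
          qed
        qed
        then show ?thesis unfolding K_def L_def by simp
      qed
      then show "j \<in> principal_ideal g" using closed_principal[OF I C divg] by blast
    qed
  qed
  then show ?thesis using gnzd by blast
qed


theorem lemma4p3:
  fixes I :: "'a::comm_ring_1 set" and f :: 'a and k :: nat
  assumes noeth: "noetherian_ring TYPE('a)"
    and I_ideal: "is_ideal I"
    and complete: "adically_complete I"
    and f_nzd: "non_zero_divisor f"
    and k_pos: "k \<ge> 1"
    and AR: "\<forall>m. ideal_pow I (m + k) \<inter> principal_ideal f
                 = ideal_prod (ideal_pow I m) (ideal_pow I k \<inter> principal_ideal f)"
  shows
    "(\<forall>m h. m \<ge> 1 \<longrightarrow>
        ideal_sum (principal_ideal h) (ideal_pow I (m + k))
          = ideal_sum (principal_ideal f) (ideal_pow I (m + k)) \<longrightarrow>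
        (\<exists>t. unit_elem t \<and> h - t * f \<in> ideal_pow I (m + k)))
   \<and> (\<forall>m h h'. m \<ge> 1 \<longrightarrow>
        ideal_sum (principal_ideal h) (ideal_pow I (m + k))
          = ideal_sum (principal_ideal f) (ideal_pow I (m + k)) \<longrightarrow>
        ideal_sum (principal_ideal h') (ideal_pow I (m + k))
          = ideal_sum (principal_ideal f) (ideal_pow I (m + k)) \<longrightarrow>
        (\<exists>v. unit_elem v \<and> h' - v * h \<in> ideal_pow I (m + k)))
   \<and> (\<forall>g. non_zero_divisor g \<longrightarrow>
        ideal_sum (principal_ideal g) (ideal_pow I (k + 1))
          = ideal_sum (principal_ideal f) (ideal_pow I (k + 1)) \<longrightarrow>
        (\<forall>m. ideal_pow I (m + k) \<inter> principal_ideal g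
               = ideal_prod (ideal_pow I m) (ideal_pow I k \<inter> principal_ideal g)))
   \<and> (\<forall>J. cartier_divisor I J \<longrightarrow>
        ideal_sum J (ideal_pow I (k + 1))
          = ideal_sum (principal_ideal f) (ideal_pow I (k + 1)) \<longrightarrow>
        (\<exists>g. non_zero_divisor g \<and> J = principal_ideal g))"
  proof -
  have P1: "\<forall>m h. m \<ge> 1 \<longrightarrow>
        ideal_sum (principal_ideal h) (ideal_pow I (m + k))
          = ideal_sum (principal_ideal f) (ideal_pow I (m + k)) \<longrightarrow>
        (\<exists>t. unit_elem t \<and> h - t * f \<in> ideal_pow I (m + k))"
    using part1[OF I_ideal complete f_nzd AR] by blast
  have P2: "\<forall>m h h'. m \<ge> 1 \<longrightarrow>
        ideal_sum (principal_ideal h) (ideal_pow I (m + k))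
          = ideal_sum (principal_ideal f) (ideal_pow I (m + k)) \<longrightarrow>
        ideal_sum (principal_ideal h') (ideal_pow I (m + k))
          = ideal_sum (principal_ideal f) (ideal_pow I (m + k)) \<longrightarrow>
        (\<exists>v. unit_elem v \<and> h' - v * h \<in> ideal_pow I (m + k))"
  proof (intro allI impI)
    fix m h h'
    assume m: "m \<ge> 1"
      and e1: "ideal_sum (principal_ideal h) (ideal_pow I (m + k))
          = ideal_sum (principal_ideal f) (ideal_pow I (m + k))"
      and e2: "ideal_sum (principal_ideal h') (ideal_pow I (m + k))
          = ideal_sum (principal_ideal f) (ideal_pow I (m + k))"
    obtain t where t: "unit_elem t" "h - t * f \<in> ideal_pow I (m + k)" using P1 m e1 by blast
    obtain t' where t': "unit_elem t'" "h' - t' * f \<in> ideal_pow I (m + k)" using P1 m e2 by blast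
    show "\<exists>v. unit_elem v \<and> h' - v * h \<in> ideal_pow I (m + k)"
      by (rule part2[OF I_ideal t t'])
  qed
  have P3: "\<forall>g. non_zero_divisor g \<longrightarrow>
        ideal_sum (principal_ideal g) (ideal_pow I (k + 1))
          = ideal_sum (principal_ideal f) (ideal_pow I (k + 1)) \<longrightarrow>
        (\<forall>m. ideal_pow I (m + k) \<inter> principal_ideal g
               = ideal_prod (ideal_pow I m) (ideal_pow I k \<inter> principal_ideal g))"
  proof (intro allI impI)
    fix g m
    assume e: "ideal_sum (principal_ideal g) (ideal_pow I (k + 1))
          = ideal_sum (principal_ideal f) (ideal_pow I (k + 1))"
    have kk: "k + 1 = 1 + k" by simp
    obtain t where t: "unit_elem t" "g - t * f \<in> ideal_pow I (1 + k)"
      using P1 e unfolding kk by blast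
    obtain u where u: "t * u = 1" using t(1) unfolding unit_elem_def by blast
    have gi: "g - t * f \<in> ideal_pow I (Suc k)" using t(2) by simp
    show "ideal_pow I (m + k) \<inter> principal_ideal g
               = ideal_prod (ideal_pow I m) (ideal_pow I k \<inter> principal_ideal g)"
      by (rule part3[OF I_ideal f_nzd AR u gi])
  qed
  have P4: "\<forall>J. cartier_divisor I J \<longrightarrow>
        ideal_sum J (ideal_pow I (k + 1))
          = ideal_sum (principal_ideal f) (ideal_pow I (k + 1)) \<longrightarrow>
        (\<exists>g. non_zero_divisor g \<and> J = principal_ideal g)"
    using part4[OF I_ideal complete f_nzd AR] by blast
  show ?thesis using P1 P2 P3 P4 by blast
qed

end
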